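(* If a Möbius transformation of $\mathcal A_2^{(0,1)}\cup\{\infty\}$ fixes each of $-e_2$, $e_2$, $0$ and $\infty$, then its Vahlen matrices are of the form $\pm\begin{pmatrix}a&0\\0&a^{-1}\end{pmatrix}$ with $a\in\mathbb R+\mathbb Re_1$ and $|a|=1$.
   Context: $\mathcal A_2$ is the real associative algebra generated by $e_1,e_2$ with $e_1^2=e_2^2=-1$, $e_1e_2=-e_2e_1$; for $a=a_0+a_1e_1+a_2e_2+a_{12}e_1e_2$, $|a|^2=a_0^2+a_1^2+a_2^2+a_{12}^2$ and $a^*=a_0+a_1e_1+a_2e_2-a_{12}e_1e_2$. $\mathcal A_2^{(0,1)}=\mathbb R+\mathbb Re_1+\mathbb Re_2$. A Vahlen matrix is $\begin{pmatrix}a&b\\c&d\end{pmatrix}$ with $a,b,c,d\in\mathcal A_2$, $ad^*-bc^*=1$ and $ab^*,cd^*\in\mathcal A_2^{(0,1)}$; it acts by $x\mapsto(ax+b)(cx+d)^{-1}$, $\infty\mapsto ac^{-1}$. The Möbius transformations of $\mathcal A_2^{(0,1)}\cup\{\infty\}$ are exactly these maps, each given by exactly two Vahlen matrices $\pm A$. *)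

theory Defs
  imports Complex_Main
begin

text \<open>The algebra A_2: elements a0 + a1 e1 + a2 e2 + a12 e1e2, with
  e1^2 = e2^2 = -1 and e1 e2 = - e2 e1.\<close>

datatype cl2 = Cl2 (cl0: real) (cl1: real) (cl2: real) (cl12: real)

instantiation cl2 :: "{zero, one, plus, minus, uminus, times, inverse}"
begin

definition zero_cl2 :: cl2 where "zero_cl2 = Cl2 0 0 0 0"
definition one_cl2 :: cl2 where "one_cl2 = Cl2 1 0 0 0"
definition plus_cl2 :: "cl2 \<Rightarrow> cl2 \<Rightarrow> cl2" where
  "plus_cl2 a b = Cl2 (cl0 a + cl0 b) (cl1 a + cl1 b) (cl2 a + cl2 b) (cl12 a + cl12 b)"
definition uminus_cl2 :: "cl2 \<Rightarrow> cl2" where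
  "uminus_cl2 a = Cl2 (- cl0 a) (- cl1 a) (- cl2 a) (- cl12 a)"
definition minus_cl2 :: "cl2 \<Rightarrow> cl2 \<Rightarrow> cl2" where
  "minus_cl2 a b = Cl2 (cl0 a - cl0 b) (cl1 a - cl1 b) (cl2 a - cl2 b) (cl12 a - cl12 b)"
text \<open>Product determined by e1^2 = e2^2 = -1, e1 e2 = - e2 e1 (e12 = e1 e2).\<close>
definition times_cl2 :: "cl2 \<Rightarrow> cl2 \<Rightarrow> cl2" where
  "times_cl2 a b = Cl2
     (cl0 a * cl0 b - cl1 a * cl1 b - cl2 a * cl2 b - cl12 a * cl12 b)
     (cl0 a * cl1 b + cl1 a * cl0 b + cl2 a * cl12 b - cl12 a * cl2 b)
     (cl0 a * cl2 b - cl1 a * cl12 b + cl2 a * cl0 b + cl12 a * cl1 b)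
     (cl0 a * cl12 b + cl1 a * cl2 b - cl2 a * cl1 b + cl12 a * cl0 b)"
text \<open>Multiplicative inverse (every nonzero element is invertible; inverse 0 = 0).\<close>
definition inverse_cl2 :: "cl2 \<Rightarrow> cl2" where
  "inverse_cl2 a = (let n = (cl0 a)^2 + (cl1 a)^2 + (cl2 a)^2 + (cl12 a)^2 in
     Cl2 (cl0 a / n) (- cl1 a / n) (- cl2 a / n) (- cl12 a / n))"
definition divide_cl2 :: "cl2 \<Rightarrow> cl2 \<Rightarrow> cl2" where
  "divide_cl2 a b = a * inverse b"

instance ..
end

definition e1 :: cl2 where "e1 = Cl2 0 1 0 0"
definition e2 :: cl2 where "e2 = Cl2 0 0 1 0"

definition cl_abs :: "cl2 \<Rightarrow> real" where
  "cl_abs a = sqrt ((cl0 a)^2 + (cl1 a)^2 + (cl2 a)^2 + (cl12 a)^2)"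

definition cl_star :: "cl2 \<Rightarrow> cl2" where
  "cl_star a = Cl2 (cl0 a) (cl1 a) (cl2 a) (- cl12 a)"

text \<open>Membership in A_2^(0,1) = R + R e1 + R e2\<close>
definition paravector :: "cl2 \<Rightarrow> bool" where
  "paravector x \<longleftrightarrow> cl12 x = 0"

definition vahlen :: "cl2 \<Rightarrow> cl2 \<Rightarrow> cl2 \<Rightarrow> cl2 \<Rightarrow> bool" where
  "vahlen a b c d \<longleftrightarrow> a * cl_star d - b * cl_star c = 1
     \<and> paravector (a * cl_star b) \<and> paravector (c * cl_star d)"

text \<open>Action on A_2^(0,1) \<union> {\<infinity>}; None represents \<infinity>.\<close>
definition mob :: "cl2 \<Rightarrow> cl2 \<Rightarrow> cl2 \<Rightarrow> cl2 \<Rightarrow> cl2 option \<Rightarrow> cl2 option" where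
  "mob a b c d p = (case p of
      None \<Rightarrow> (if c = 0 then None else Some (a * inverse c))
    | Some x \<Rightarrow> (if c * x + d = 0 then None
                 else Some ((a * x + b) * inverse (c * x + d))))"

end

theory Submission
  imports Defs
begin

lemma cl2_eq_iff: "x = y \<longleftrightarrow> cl0 x = cl0 y \<and> cl1 x = cl1 y \<and> cl2 x = cl2 y \<and> cl12 x = cl12 y"
  by (cases x; cases y) auto

lemma cl_assoc: "(x * y) * z = x * (y * (z::cl2))"
  by (simp add: cl2_eq_iff times_cl2_def algebra_simps)

lemma cl_nz: "x \<noteq> 0 \<Longrightarrow> (cl0 x)^2 + (cl1 x)^2 + (cl2 x)^2 + (cl12 x)^2 > 0"
proof -
  assume "x \<noteq> 0"
  then have "\<not> (cl0 x = 0 \<and> cl1 x = 0 \<and> cl2 x = 0 \<and> cl12 x = 0)"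
    by (simp add: cl2_eq_iff zero_cl2_def)
  moreover have "(cl0 x)^2 + (cl1 x)^2 + (cl2 x)^2 + (cl12 x)^2 \<ge> 0" by simp
  moreover have "(cl0 x)^2 + (cl1 x)^2 + (cl2 x)^2 + (cl12 x)^2 \<noteq> 0"
  proof
    assume h: "(cl0 x)^2 + (cl1 x)^2 + (cl2 x)^2 + (cl12 x)^2 = 0"
    have "(cl0 x)^2 = 0" "(cl1 x)^2 = 0" "(cl2 x)^2 = 0" "(cl12 x)^2 = 0"
      using h zero_le_power2[of "cl0 x"] zero_le_power2[of "cl1 x"] zero_le_power2[of "cl2 x"] zero_le_power2[of "cl12 x"] by linarith+
    then show False using calculation by simp
  qed
  ultimately show ?thesis by linarith
qed
lemma cl_inv_l: "x \<noteq> 0 \<Longrightarrow> inverse x * x = (1::cl2)"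
proof -
  assume "x \<noteq> 0"
  from cl_nz[OF this] obtain x0 x1 x2 x3 where X: "x = Cl2 x0 x1 x2 x3" and
    n: "x0^2+x1^2+x2^2+x3^2 > 0" by (cases x) auto
  define n where "n = x0^2+x1^2+x2^2+x3^2"
  have nz: "n \<noteq> 0" using n n_def by simp
  show ?thesis unfolding X
    apply (simp add: cl2_eq_iff times_cl2_def inverse_cl2_def one_cl2_def Let_def flip: n_def)
    using nz apply (simp add: minus_divide_left[symmetric] divide_simps)
  apply (simp add: n_def power2_eq_square algebra_simps)
  done
qed
lemma cl_inv_r: "x \<noteq> 0 \<Longrightarrow> x * inverse x = (1::cl2)"
proof -
  assume "x \<noteq> 0"
  from cl_nz[OF this] obtain x0 x1 x2 x3 where X: "x = Cl2 x0 x1 x2 x3" and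
    n: "x0^2+x1^2+x2^2+x3^2 > 0" by (cases x) auto
  define n where "n = x0^2+x1^2+x2^2+x3^2"
  have nz: "n \<noteq> 0" using n n_def by simp
  show ?thesis unfolding X
    apply (simp add: cl2_eq_iff times_cl2_def inverse_cl2_def one_cl2_def Let_def flip: n_def)
    using nz apply (simp add: minus_divide_left[symmetric] divide_simps)
  apply (simp add: n_def power2_eq_square algebra_simps)
  done
qed
lemma cl_mult1: "x * 1 = (x::cl2)" "1 * x = x" "0 * x = (0::cl2)" "x * 0 = 0" "x + 0 = x" "0 + x = x" "x - 0 = x"
  by (simp_all add: cl2_eq_iff times_cl2_def one_cl2_def zero_cl2_def plus_cl2_def minus_cl2_def)

theorem proposition3p4:
  fixes a b c d :: cl2
  assumes "vahlen a b c d"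
    and "mob a b c d (Some (- e2)) = Some (- e2)"
    and "mob a b c d (Some e2) = Some e2"
    and "mob a b c d (Some 0) = Some 0"
    and "mob a b c d None = None"
  shows "\<exists>u. cl2 u = 0 \<and> cl12 u = 0 \<and> cl_abs u = 1 \<and>
           ((a, b, c, d) = (u, 0, 0, inverse u) \<or> (a, b, c, d) = (- u, 0, 0, - inverse u))"
proof -
  have c0: "c = 0" using assms(5) by (simp add: mob_def split: if_splits)
  have dnz: "d \<noteq> 0" and bd: "b * inverse d = 0"
    using assms(4) by (auto simp: mob_def c0 cl_mult1 split: if_splits)
  have b0: "b = 0"
  proof -
    have "b = b * (inverse d * d)" using cl_inv_l[OF dnz] by (simp add: cl_mult1)
    also have "\<dots> = 0" by (simp add: cl_assoc[symmetric] bd cl_mult1)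
    finally show ?thesis .
  qed
  have "(a * e2) * inverse d = e2"
    using assms(3) by (auto simp: mob_def c0 b0 cl_mult1 split: if_splits)
  then have "((a * e2) * inverse d) * d = e2 * d" by simp
  then have ae: "a * e2 = e2 * d" by (simp add: cl_assoc cl_inv_l[OF dnz] cl_mult1)
  have ad: "a * cl_star d = 1" using assms(1)
    by (simp add: vahlen_def b0 cl_mult1)
  obtain a0 a1 a2 a3 where A: "a = Cl2 a0 a1 a2 a3" by (cases a)
  obtain d0 d1 d2 d3 where D: "d = Cl2 d0 d1 d2 d3" by (cases d)
  from ae have E: "d0 = a0" "d1 = - a1" "d2 = a2" "d3 = - a3"
    by (auto simp: A D e2_def times_cl2_def)
  from ad have F: "a0*a0 + a1*a1 - a2*a2 - a3*a3 = 1" "a0*a2 = a1*a3" "a0*a3 = - a1*a2"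
    by (auto simp: A D E cl_star_def times_cl2_def one_cl2_def algebra_simps)
  have pos: "a0*a0 + a1*a1 > 0"
  proof -
    have "a2*a2 \<ge> 0" "a3*a3 \<ge> 0" by simp_all
    then show ?thesis using F(1) by linarith
  qed
  have a2: "a2 = 0"
  proof -
    have "a2 * (a0*a0 + a1*a1) = a0*(a0*a2) + a1*(a1*a2)" by (simp add: algebra_simps)
    also have "\<dots> = a0*(a1*a3) + a1*(- (a0*a3))" using F(2,3) by (simp add: mult.commute)
    also have "\<dots> = 0" by (simp add: algebra_simps)
    finally show ?thesis using pos by force
  qed
  have a3: "a3 = 0"
  proof -
    have "a3 * (a0*a0 + a1*a1) = a0*(a0*a3) + a1*(a1*a3)" by (simp add: algebra_simps)
    also have "\<dots> = a0*(- (a1*a2)) + a1*(a0*a2)" using F(2,3) by (simp add: mult.commute)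
    also have "\<dots> = 0" by (simp add: algebra_simps)
    finally show ?thesis using pos by force
  qed
  have N: "a0^2 + a1^2 = 1" using F a2 a3 by (simp add: power2_eq_square)
  show ?thesis
    apply (rule exI[of _ a])
    using N by (simp add: A D E a2 a3 b0 c0 cl_abs_def inverse_cl2_def Let_def)
qed

end
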